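(* Let $\Gamma$ be the first Grigorchuk group with generators $a,b,c,d$, acting on the right on $\{0,1\}^{\mathbb N}$, and let $\rho=111\cdots$. For a word $w=w_1\cdots w_n$ over $\{a,b,c,d\}$ set $\delta(w)=\#\{\rho\,w_{i+1}\cdots w_n: i=0,\dots,n\}$. Let $\eta$ be the real root of $t^3+t^2+t-2$. There exists a constant $C$ such that for every $n\in\mathbb N$ there exists a word $w_n$ over $\{a,b,c,d\}$ of length at most $C(2/\eta)^n$ with $\delta(w_n)\ge 2^n$.
   Context: The first Grigorchuk group $\Gamma$ is the group of permutations of $\{0,1\}^{\mathbb N}$ (acting on the right) generated by $a,b,c,d$, defined recursively for $x\in\{0,1\}$ and infinite binary sequences $u$ by: $(xu)a=(1-x)u$; $(0u)b=0(ua)$, $(1u)b=1(uc)$; $(0u)c=0(ua)$, $(1u)c=1(ud)$; $(0u)d=0u$, $(1u)d=1(ub)$. *)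

theory Defs
  imports Complex_Main
begin

text \<open>Generators of the first Grigorchuk group. Binary digits are encoded as
  booleans: False = 0, True = 1.\<close>
datatype gen = A | B | C | D

fun act_fin :: "gen \<Rightarrow> bool list \<Rightarrow> bool list" where
  "act_fin g [] = []"
| "act_fin A (x # u) = (\<not> x) # u"
| "act_fin B (False # u) = False # act_fin A u"
| "act_fin B (True # u) = True # act_fin C u"
| "act_fin C (False # u) = False # act_fin A u"
| "act_fin C (True # u) = True # act_fin D u"
| "act_fin D (False # u) = False # u"
| "act_fin D (True # u) = True # act_fin B u"

text \<open>Induced action on infinite binary sequences: the n-th digit of the
  image depends only on the first n+1 digits.\<close>
definition act :: "gen \<Rightarrow> (nat \<Rightarrow> bool) \<Rightarrow> (nat \<Rightarrow> bool)" where
  "act g u = (\<lambda>n. act_fin g (map u [0..<Suc n]) ! n)"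

text \<open>Right action of a word: u w_1 ... w_n applies w_1 first.\<close>
definition act_word :: "(nat \<Rightarrow> bool) \<Rightarrow> gen list \<Rightarrow> (nat \<Rightarrow> bool)" where
  "act_word u w = foldl (\<lambda>v g. act g v) u w"

definition rho :: "nat \<Rightarrow> bool" where
  "rho = (\<lambda>_. True)"

definition delta :: "gen list \<Rightarrow> nat" where
  "delta w = card {act_word rho (drop i w) | i. i \<le> length w}"

end

theory Submission
  imports Defs
begin

definition scons :: "bool \<Rightarrow> (nat \<Rightarrow> bool) \<Rightarrow> nat \<Rightarrow> bool" where
  "scons x v = (\<lambda>n. case n of 0 \<Rightarrow> x | Suc m \<Rightarrow> v m)"

lemma scons_0[simp]: "scons x v 0 = x" by (simp add: scons_def)
lemma scons_Suc[simp]: "scons x v (Suc n) = v n" by (simp add: scons_def)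

lemma scons_inj[simp]: "scons x v = scons y w \<longleftrightarrow> x = y \<and> v = w"
proof
  assume h: "scons x v = scons y w"
  have "x = y" using fun_cong[OF h, of 0] by simp
  moreover have "v = w"
  proof
    fix n show "v n = w n" using fun_cong[OF h, of "Suc n"] by simp
  qed
  ultimately show "x = y \<and> v = w" by simp
qed simp

lemma scons_split: "v = scons (v 0) (\<lambda>n. v (Suc n))"
  by (simp add: scons_def fun_eq_iff split: nat.split)

fun sec :: "bool \<Rightarrow> gen \<Rightarrow> gen list" where
  "sec x A = []"
| "sec True B = [C]"
| "sec False B = [A]"
| "sec True C = [D]"
| "sec False C = [A]"
| "sec True D = [B]"
| "sec False D = []"

lemma act_word_Nil[simp]: "act_word u [] = u" by (simp add: act_word_def)
lemma act_word_Cons[simp]: "act_word u (g # w) = act_word (act g u) w" by (simp add: act_word_def)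
lemma act_word_append: "act_word u (w1 @ w2) = act_word (act_word u w1) w2"
  by (simp add: act_word_def)

lemma map_scons_upt: "map (scons x v) [0..<Suc (Suc m)] = x # map v [0..<Suc m]"
  by (simp only: map_upt_Suc scons_0 scons_Suc)

lemma act_scons:
  "act g (scons x v) = scons (if g = A then \<not> x else x) (act_word v (sec x g))"
proof
  fix n
  show "act g (scons x v) n = scons (if g = A then \<not> x else x) (act_word v (sec x g)) n"
  proof (cases n)
    case 0
    then show ?thesis by (cases g; cases x; simp add: act_def)
  next
    case (Suc m)
    then show ?thesis
      by (cases g; cases x; simp add: act_def map_scons_upt del: upt_Suc)
  qed
qed

lemma act_word_single[simp]: "act_word v [g] = act g v" by simp

lemma act_AA[simp]: "act A (act A t) = t"
proof -
  have "t = scons (t 0) (\<lambda>n. t (Suc n))" by (rule scons_split)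
  then obtain x s where "t = scons x s" by blast
  then show ?thesis by (simp add: act_scons)
qed

lemma klein: "\<forall>v. act D (act C v) n = act B v n \<and> act B (act D v) n = act C v n
   \<and> act C (act B v) n = act D v n"
proof (induction n)
  case 0
  show ?case
  proof
    fix v :: "nat \<Rightarrow> bool"
    obtain x s where v: "v = scons x s" using scons_split by blast
    show "act D (act C v) 0 = act B v 0 \<and> act B (act D v) 0 = act C v 0
       \<and> act C (act B v) 0 = act D v 0"
      unfolding v by (cases x; simp add: act_scons)
  qed
next
  case (Suc m)
  show ?case
  proof
    fix v :: "nat \<Rightarrow> bool"
    obtain x s where v: "v = scons x s" using scons_split by blast
    show "act D (act C v) (Suc m) = act B v (Suc m) \<and> act B (act D v) (Suc m) = act C v (Suc m)
       \<and> act C (act B v) (Suc m) = act D v (Suc m)"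
      unfolding v using Suc.IH by (cases x; simp add: act_scons)
  qed
qed

lemma act_CD: "act D (act C v) = act B v"
  using klein by blast

definition eqv :: "gen list \<Rightarrow> gen list \<Rightarrow> bool" where
  "eqv w1 w2 = (\<forall>v. act_word v w1 = act_word v w2)"

lemma eqv_CD: "eqv [C, D] [B]"
  by (simp add: eqv_def act_CD)

lemma eqv_refl: "eqv w w" by (simp add: eqv_def)

fun proj :: "bool \<Rightarrow> gen list \<Rightarrow> gen list" where
  "proj x [] = []"
| "proj x (g # w) = sec x g @ proj (if g = A then \<not> x else x) w"

definition cntA :: "gen list \<Rightarrow> nat" where
  "cntA w = length (filter (\<lambda>g. g = A) w)"

lemma cntA_Nil[simp]: "cntA [] = 0" by (simp add: cntA_def)
lemma cntA_Cons[simp]: "cntA (g # w) = (if g = A then Suc (cntA w) else cntA w)"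
  by (simp add: cntA_def)

lemma act_word_scons:
  "act_word (scons x v) w = scons (x \<noteq> odd (cntA w)) (act_word v (proj x w))"
proof (induction w arbitrary: x v)
  case Nil
  then show ?case by simp
next
  case (Cons g w)
  show ?case
    by (simp add: act_scons Cons.IH act_word_append) (cases g; cases x; simp)
qed

lemma rho_scons: "rho = scons True rho"
  by (simp add: rho_def scons_def fun_eq_iff split: nat.split)

definition pt :: "gen list \<Rightarrow> nat \<Rightarrow> bool" where
  "pt w = act_word rho w"

lemma pt_eq: "pt w = scons (\<not> odd (cntA w)) (pt (proj True w))"
proof -
  have "pt w = act_word (scons True rho) w"
    unfolding pt_def by (simp only: rho_scons[symmetric])
  then show ?thesis by (simp add: act_word_scons pt_def)
qed

datatype L = Lb | Lc | Ld

fun gl :: "L \<Rightarrow> gen" where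
  "gl Lb = B" | "gl Lc = C" | "gl Ld = D"

lemma gl_not_A[simp]: "gl y \<noteq> A" by (cases y) auto

fun alt' :: "L list \<Rightarrow> gen list" where
  "alt' [] = []"
| "alt' (y # ys) = gl y # A # alt' ys"

definition alt :: "L list \<Rightarrow> gen list" where
  "alt ys = A # alt' ys"

lemma alt'_Cons_alt: "alt' (y # ys) = gl y # alt ys" by (simp add: alt_def)

fun T :: "bool \<Rightarrow> L list \<Rightarrow> gen list" where
  "T x [] = []"
| "T x (y # ys) = sec x (gl y) @ T (\<not> x) ys"

lemma proj_alt': "proj x (alt' ys) = T x ys"
  by (induction ys arbitrary: x) auto

lemma cntA_alt': "cntA (alt' ys) = length ys"
  by (induction ys) auto

lemma pt_alt': "pt (alt' zs) = scons (even (length zs)) (pt (T True zs))"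
  by (subst pt_eq) (simp add: proj_alt' cntA_alt')

lemma pt_alt: "pt (alt zs) = scons (odd (length zs)) (pt (T False zs))"
  by (subst pt_eq) (simp add: alt_def proj_alt' cntA_alt')

definition sufs :: "'a list \<Rightarrow> 'a list set" where
  "sufs w = {drop i w | i. i \<le> length w}"

lemma sufs_Nil[simp]: "sufs [] = {[]}" by (simp add: sufs_def)

lemma sufs_Cons: "sufs (x # w) = insert (x # w) (sufs w)"
proof
  show "sufs (x # w) \<subseteq> insert (x # w) (sufs w)"
  proof
    fix t assume "t \<in> sufs (x # w)"
    then obtain i where i: "i \<le> length (x # w)" "t = drop i (x # w)" by (auto simp: sufs_def)
    show "t \<in> insert (x # w) (sufs w)"
    proof (cases i)
      case 0 then show ?thesis using i by simp
    next
      case (Suc j) then show ?thesis using i by (auto simp: sufs_def)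
    qed
  qed
next
  show "insert (x # w) (sufs w) \<subseteq> sufs (x # w)"
  proof
    fix t assume "t \<in> insert (x # w) (sufs w)"
    then show "t \<in> sufs (x # w)"
    proof
      assume "t = x # w" then show ?thesis unfolding sufs_def by (intro CollectI exI[of _ 0]) simp
    next
      assume "t \<in> sufs w"
      then obtain i where i: "i \<le> length w" "t = drop i w" by (auto simp: sufs_def)
      then show ?thesis unfolding sufs_def by (intro CollectI exI[of _ "Suc i"]) simp
    qed
  qed
qed

lemma finite_sufs[simp]: "finite (sufs w)"
proof -
  have "sufs w = (\<lambda>i. drop i w) ` {..length w}" by (auto simp: sufs_def)
  then show ?thesis by simp
qed

lemma self_sufs: "w \<in> sufs w"
  by (cases w) (auto simp: sufs_Cons)

lemma sufs_append_sub: "sufs w \<subseteq> sufs (b @ w)"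
  by (induction b) (auto simp: sufs_Cons)

lemma length_sec: "length (sec x g) \<le> 1"
  by (cases x; cases g) auto

lemma sufs_le1: "length s \<le> 1 \<Longrightarrow> sufs (s @ r) \<subseteq> insert (s @ r) (sufs r)"
  by (cases s) (auto simp: sufs_Cons)

lemma T_sufs_e: "t \<in> sufs (T (even (length ys)) ys) \<Longrightarrow> \<exists>zs\<in>sufs ys. t = T (even (length zs)) zs"
proof (induction ys arbitrary: t)
  case Nil
  then show ?case by simp
next
  case (Cons y ys)
  have eq: "T (even (length (y # ys))) (y # ys) = sec (odd (length ys)) (gl y) @ T (even (length ys)) ys"
    by simp
  from Cons.prems have t1: "t \<in> sufs (sec (odd (length ys)) (gl y) @ T (even (length ys)) ys)"
    by (simp only: eq)
  have "t \<in> insert (sec (odd (length ys)) (gl y) @ T (even (length ys)) ys) (sufs (T (even (length ys)) ys))"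
    using sufs_le1[OF length_sec] t1 by blast
  then have "t \<in> insert (T (even (length (y # ys))) (y # ys)) (sufs (T (even (length ys)) ys))"
    by (simp only: eq)
  then show ?case
  proof
    assume "t = T (even (length (y # ys))) (y # ys)"
    then show ?thesis using self_sufs by blast
  next
    assume "t \<in> sufs (T (even (length ys)) ys)"
    then show ?thesis using Cons.IH by (auto simp: sufs_Cons)
  qed
qed

lemma T_sufs_o: "t \<in> sufs (T (odd (length ys)) ys) \<Longrightarrow> \<exists>zs\<in>sufs ys. t = T (odd (length zs)) zs"
proof (induction ys arbitrary: t)
  case Nil
  then show ?case by simp
next
  case (Cons y ys)
  have eq: "T (odd (length (y # ys))) (y # ys) = sec (even (length ys)) (gl y) @ T (odd (length ys)) ys"
    by simp
  from Cons.prems have t1: "t \<in> sufs (sec (even (length ys)) (gl y) @ T (odd (length ys)) ys)"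
    by (simp only: eq)
  have "t \<in> insert (sec (even (length ys)) (gl y) @ T (odd (length ys)) ys) (sufs (T (odd (length ys)) ys))"
    using sufs_le1[OF length_sec] t1 by blast
  then have "t \<in> insert (T (odd (length (y # ys))) (y # ys)) (sufs (T (odd (length ys)) ys))"
    by (simp only: eq)
  then show ?case
  proof
    assume "t = T (odd (length (y # ys))) (y # ys)"
    then show ?thesis using self_sufs by blast
  next
    assume "t \<in> sufs (T (odd (length ys)) ys)"
    then show ?thesis using Cons.IH by (auto simp: sufs_Cons)
  qed
qed

lemma alt_sufs: "zs \<in> sufs ys \<Longrightarrow> alt zs \<in> sufs (alt ys) \<and> alt' zs \<in> sufs (alt ys)"
proof (induction ys)
  case Nil
  then show ?case by (simp add: alt_def sufs_Cons)
next
  case (Cons y ys)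
  have s: "sufs (alt (y # ys)) = insert (alt (y # ys)) (insert (alt' (y # ys)) (sufs (alt ys)))"
    by (simp add: alt_def sufs_Cons alt'_Cons_alt)
  from Cons.prems have "zs = y # ys \<or> zs \<in> sufs ys" by (simp add: sufs_Cons)
  then show ?case
  proof
    assume "zs = y # ys" then show ?thesis using s by simp
  next
    assume "zs \<in> sufs ys" then show ?thesis using Cons.IH s by blast
  qed
qed

definition Dl :: "gen list \<Rightarrow> nat" where
  "Dl w = card (pt ` sufs w)"

lemma delta_Dl: "delta w = Dl w"
proof -
  have "{act_word rho (drop i w) |i. i \<le> length w} = pt ` sufs w"
    by (auto simp: sufs_def pt_def)
  then show ?thesis by (simp add: delta_def Dl_def)
qed

lemma Dl_alt: "Dl (T (even (length ys)) ys) + Dl (T (odd (length ys)) ys) \<le> Dl (alt ys)"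
proof -
  let ?S1 = "pt ` sufs (T (even (length ys)) ys)"
  let ?S0 = "pt ` sufs (T (odd (length ys)) ys)"
  have sub1: "scons True ` ?S1 \<subseteq> pt ` sufs (alt ys)"
  proof
    fix p assume "p \<in> scons True ` ?S1"
    then obtain t where t: "t \<in> sufs (T (even (length ys)) ys)" "p = scons True (pt t)" by auto
    from T_sufs_e[OF t(1)] obtain zs where zs: "zs \<in> sufs ys" "t = T (even (length zs)) zs" by blast
    show "p \<in> pt ` sufs (alt ys)"
    proof (cases "even (length zs)")
      case True
      then have "p = pt (alt' zs)" using t zs by (simp add: pt_alt')
      then show ?thesis using alt_sufs[OF zs(1)] by blast
    next
      case False
      then have "p = pt (alt zs)" using t zs by (simp add: pt_alt)
      then show ?thesis using alt_sufs[OF zs(1)] by blast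
    qed
  qed
  have sub0: "scons False ` ?S0 \<subseteq> pt ` sufs (alt ys)"
  proof
    fix p assume "p \<in> scons False ` ?S0"
    then obtain t where t: "t \<in> sufs (T (odd (length ys)) ys)" "p = scons False (pt t)" by auto
    from T_sufs_o[OF t(1)] obtain zs where zs: "zs \<in> sufs ys" "t = T (odd (length zs)) zs" by blast
    show "p \<in> pt ` sufs (alt ys)"
    proof (cases "even (length zs)")
      case True
      then have "p = pt (alt zs)" using t zs by (simp add: pt_alt)
      then show ?thesis using alt_sufs[OF zs(1)] by blast
    next
      case False
      then have "p = pt (alt' zs)" using t zs by (simp add: pt_alt')
      then show ?thesis using alt_sufs[OF zs(1)] by blast
    qed
  qed
  have c1: "card (scons True ` ?S1) = card ?S1"
    by (rule card_image) (auto simp: inj_on_def)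
  have c0: "card (scons False ` ?S0) = card ?S0"
    by (rule card_image) (auto simp: inj_on_def)
  have disj: "scons True ` ?S1 \<inter> scons False ` ?S0 = {}" by auto
  have "card (scons True ` ?S1 \<union> scons False ` ?S0) = card ?S1 + card ?S0"
    using card_Un_disjoint[OF _ _ disj] c1 c0 by simp
  moreover have "card (scons True ` ?S1 \<union> scons False ` ?S0) \<le> card (pt ` sufs (alt ys))"
    by (rule card_mono) (use sub1 sub0 in auto)
  ultimately show ?thesis by (simp add: Dl_def)
qed

definition SC :: "gen list \<Rightarrow> gen list \<Rightarrow> bool" where
  "SC w' w = (eqv w' w \<and> (\<forall>t\<in>sufs w. \<exists>t'\<in>sufs w'. eqv t' t))"

lemma SC_refl: "SC w w"
  unfolding SC_def using eqv_refl by blast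

lemma SC_cons: "SC w' w \<Longrightarrow> eqv b [y] \<Longrightarrow> SC (b @ w') (y # w)"
proof -
  assume sc: "SC w' w" and e: "eqv b [y]"
  have e1: "eqv (b @ w') (y # w)"
    using sc e unfolding SC_def eqv_def by (simp add: act_word_append)
  have "\<forall>t\<in>sufs (y # w). \<exists>t'\<in>sufs (b @ w'). eqv t' t"
  proof
    fix t assume "t \<in> sufs (y # w)"
    then have "t = y # w \<or> t \<in> sufs w" by (simp add: sufs_Cons)
    then show "\<exists>t'\<in>sufs (b @ w'). eqv t' t"
    proof
      assume "t = y # w" then show ?thesis using e1 self_sufs by blast
    next
      assume "t \<in> sufs w"
      then show ?thesis using sc sufs_append_sub unfolding SC_def by blast
    qed
  qed
  then show ?thesis using e1 by (simp add: SC_def)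
qed

lemma SC_Dl: "SC w' w \<Longrightarrow> Dl w \<le> Dl w'"
proof -
  assume sc: "SC w' w"
  have "pt ` sufs w \<subseteq> pt ` sufs w'"
  proof
    fix p assume "p \<in> pt ` sufs w"
    then obtain t where t: "t \<in> sufs w" "p = pt t" by auto
    then obtain t' where "t' \<in> sufs w'" "eqv t' t" using sc unfolding SC_def by blast
    then have "pt t' = p" using t by (simp add: eqv_def pt_def)
    then show "p \<in> pt ` sufs w'" using \<open>t' \<in> sufs w'\<close> by blast
  qed
  then show ?thesis unfolding Dl_def by (rule card_mono[rotated]) simp
qed

lemma sufs_snoc: "sufs (w @ [g]) = insert [] ((\<lambda>t. t @ [g]) ` sufs w)"
proof (induction w)
  case Nil
  then show ?case by (auto simp: sufs_Cons)
next
  case (Cons x w)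
  then show ?case by (simp add: sufs_Cons insert_commute)
qed

lemma Dl_snoc: "Dl (w @ [g]) \<le> Suc (Dl w)"
proof -
  have "pt ` sufs (w @ [g]) = insert (pt []) (act g ` (pt ` sufs w))"
    unfolding sufs_snoc image_insert image_image by (simp add: pt_def act_word_append)
  then have "Dl (w @ [g]) \<le> Suc (card (act g ` (pt ` sufs w)))"
    unfolding Dl_def by (simp add: card_insert_le_m1 card_insert_if)
  also have "\<dots> \<le> Suc (Dl w)" unfolding Dl_def by (simp add: card_image_le)
  finally show ?thesis .
qed

lemma Dl_Cons: "Dl (g # w) \<le> Suc (Dl w)"
  unfolding Dl_def sufs_Cons by (simp add: card_insert_if)

fun th :: "L \<Rightarrow> L list" where
  "th Lb = [Lb, Ld, Lc]" | "th Lc = [Lb, Lb]" | "th Ld = [Lc, Lc]"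

definition Th :: "L list \<Rightarrow> L list" where
  "Th ys = concat (map th ys)"

lemma Th_Nil[simp]: "Th [] = []" by (simp add: Th_def)
lemma Th_Cons[simp]: "Th (y # ys) = th y @ Th ys" by (simp add: Th_def)

lemma T_append: "T x (a @ b) = T x a @ T (if even (length a) then x else \<not> x) b"
  by (induction a arbitrary: x) auto

definition nB :: "L list \<Rightarrow> nat" where
  "nB ys = length (filter (\<lambda>y. y = Lb) ys)"

lemma nB_Nil[simp]: "nB [] = 0" by (simp add: nB_def)
lemma nB_Cons[simp]: "nB (y # ys) = (if y = Lb then Suc (nB ys) else nB ys)" by (simp add: nB_def)

lemma SC_main: "SC (T True (Th r) @ (if odd (nB r) then [A] else [])) (alt' r) \<and>
                SC (T False (Th r) @ (if even (nB r) then [A] else [])) (alt r)"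
proof (induction r)
  case Nil
  then show ?case by (simp add: alt_def SC_refl)
next
  case (Cons y r)
  note IH1 = Cons.IH[THEN conjunct1] and IH2 = Cons.IH[THEN conjunct2]
  show ?case
  proof (cases y)
    case Lb
    have a1: "T True (Th (y # r)) @ (if odd (nB (y # r)) then [A] else [])
        = [C, D] @ (T False (Th r) @ (if even (nB r) then [A] else []))"
      using Lb by (simp add: T_append)
    have b1: "alt' (y # r) = B # alt r" using Lb by (simp add: alt_def)
    have a2: "T False (Th (y # r)) @ (if even (nB (y # r)) then [A] else [])
        = [A] @ ([B] @ ([A] @ (T True (Th r) @ (if odd (nB r) then [A] else []))))"
      using Lb by (simp add: T_append)
    have b2: "alt (y # r) = A # B # A # alt' r" using Lb by (simp add: alt_def)
    show ?thesis
      unfolding a1 b1 a2 b2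
      by (intro conjI SC_cons IH1 IH2 eqv_CD eqv_refl)
  next
    case Lc
    have a1: "T True (Th (y # r)) @ (if odd (nB (y # r)) then [A] else [])
        = [C] @ ([A] @ (T True (Th r) @ (if odd (nB r) then [A] else [])))"
      using Lc by (simp add: T_append)
    have b1: "alt' (y # r) = C # A # alt' r" using Lc by simp
    have a2: "T False (Th (y # r)) @ (if even (nB (y # r)) then [A] else [])
        = [A] @ ([C] @ (T False (Th r) @ (if even (nB r) then [A] else [])))"
      using Lc by (simp add: T_append)
    have b2: "alt (y # r) = A # C # alt r" using Lc by (simp add: alt_def)
    show ?thesis
      unfolding a1 b1 a2 b2
      by (intro conjI SC_cons IH1 IH2 eqv_refl)
  next
    case Ld
    have a1: "T True (Th (y # r)) @ (if odd (nB (y # r)) then [A] else [])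
        = [D] @ ([A] @ (T True (Th r) @ (if odd (nB r) then [A] else [])))"
      using Ld by (simp add: T_append)
    have b1: "alt' (y # r) = D # A # alt' r" using Ld by simp
    have a2: "T False (Th (y # r)) @ (if even (nB (y # r)) then [A] else [])
        = [A] @ ([D] @ (T False (Th r) @ (if even (nB r) then [A] else [])))"
      using Ld by (simp add: T_append)
    have b2: "alt (y # r) = A # D # alt r" using Ld by (simp add: alt_def)
    show ?thesis
      unfolding a1 b1 a2 b2
      by (intro conjI SC_cons IH1 IH2 eqv_refl)
  qed
qed

lemma Dl_if: "Dl (w @ (if P then [A] else [])) \<le> Suc (Dl w)"
  using Dl_snoc[of w A] by (cases P) auto

lemma step: "2 * Dl (alt xs) \<le> Dl (alt (Th xs)) + 3"
proof -
  have h1: "Dl (alt' xs) \<le> Suc (Dl (T True (Th xs)))"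
    using SC_Dl[OF SC_main[THEN conjunct1]] Dl_if le_trans by blast
  have h2: "Dl (alt xs) \<le> Suc (Dl (alt' xs))"
    unfolding alt_def by (rule Dl_Cons)
  have h3: "Dl (alt xs) \<le> Suc (Dl (T False (Th xs)))"
    using SC_Dl[OF SC_main[THEN conjunct2]] Dl_if le_trans by blast
  have h4: "Dl (T True (Th xs)) + Dl (T False (Th xs)) \<le> Dl (alt (Th xs))"
    using Dl_alt[of "Th xs"] by (cases "even (length (Th xs))") auto
  show ?thesis using h1 h2 h3 h4 by linarith
qed

lemma base: "4 \<le> Dl (alt [Lb, Lb])"
proof -
  have w: "alt [Lb, Lb] = [A, B, A, B, A]" by (simp add: alt_def)
  have sub: "{pt [], pt [A], pt [A, B, A], pt [A, B, A, B, A]} \<subseteq> pt ` sufs [A, B, A, B, A]"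
    by (simp add: sufs_Cons)
  have p0: "pt [] = scons True (scons True rho)"
    unfolding pt_def by (simp add: rho_scons[symmetric])
  have p1: "pt [A] = scons False (scons True rho)"
    by (subst pt_eq) (simp add: pt_def rho_scons[symmetric])
  have p2: "pt [A, B, A] = scons True (scons False (scons True rho))"
    by (subst pt_eq) (simp add: p1)
  have p3: "pt [A, B, A, B, A] = scons False (pt [A, C])"
    by (subst pt_eq) simp
  have p4: "pt [A, C] = scons False (pt (proj True [A, C]))"
    by (subst pt_eq) simp
  have "card {pt [], pt [A], pt [A, B, A], pt [A, B, A, B, A]} = 4"
    by (simp add: p0 p1 p2 p3 p4)
  then have "4 \<le> card (pt ` sufs [A, B, A, B, A])"
    using card_mono[OF _ sub] by simp
  then show ?thesis by (simp add: Dl_def w)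
qed

lemma growth: "2 ^ n + 3 \<le> Dl (alt ((Th ^^ n) [Lb, Lb]))"
proof (induction n)
  case 0
  then show ?case using base by simp
next
  case (Suc n)
  have "2 * Dl (alt ((Th ^^ n) [Lb, Lb])) \<le> Dl (alt ((Th ^^ Suc n) [Lb, Lb])) + 3"
    using step by simp
  then show ?case using Suc.IH by simp
qed

lemma eta_bounds:
  fixes \<eta> :: real
  assumes "\<eta> ^ 3 + \<eta> ^ 2 + \<eta> - 2 = 0"
  shows "0 < \<eta>" "\<eta> < 1"
proof -
  have q: "\<eta> ^ 2 + \<eta> + 1 > 0"
  proof -
    have "(\<eta> + 1/2) ^ 2 \<ge> 0" by simp
    then show ?thesis by (simp add: power2_eq_square algebra_simps)
  qed
  have e: "\<eta> * (\<eta> ^ 2 + \<eta> + 1) = 2"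
    using assms by (simp add: power2_eq_square power3_eq_cube algebra_simps)
  show "0 < \<eta>"
  proof (rule ccontr)
    assume "\<not> 0 < \<eta>"
    then have "\<eta> * (\<eta> ^ 2 + \<eta> + 1) \<le> 0"
      using q by (simp add: mult_nonpos_nonneg)
    then show False using e by simp
  qed
  show "\<eta> < 1"
  proof (rule ccontr)
    assume "\<not> \<eta> < 1"
    then have h: "1 \<le> \<eta>" by simp
    then have "1 \<le> \<eta> ^ 2" by (simp add: one_le_power)
    then have "3 \<le> \<eta> ^ 2 + \<eta> + 1" using h by linarith
    then have "1 * 3 \<le> \<eta> * (\<eta> ^ 2 + \<eta> + 1)"
      by (intro mult_mono) (use h in auto)
    then show False using e by simp
  qed
qed

fun fw :: "real \<Rightarrow> L \<Rightarrow> real" where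
  "fw e Lb = 1" | "fw e Lc = e" | "fw e Ld = e ^ 2"

definition F :: "real \<Rightarrow> L list \<Rightarrow> real" where
  "F e ys = sum_list (map (fw e) ys)"

lemma F_Nil[simp]: "F e [] = 0" by (simp add: F_def)
lemma F_Cons[simp]: "F e (y # ys) = fw e y + F e ys" by (simp add: F_def)
lemma F_append[simp]: "F e (a @ b) = F e a + F e b" by (simp add: F_def)

lemma F_Th:
  fixes e :: real
  assumes "e ^ 3 + e ^ 2 + e - 2 = 0" "0 < e"
  shows "F e (Th ys) = (2 / e) * F e ys"
proof (induction ys)
  case Nil
  then show ?case by simp
next
  case (Cons y ys)
  have "F e (th y) = (2 / e) * fw e y"
  proof (cases y)
    case Lb
    have "1 + e ^ 2 + e = 2 / e"
      using assms by (simp add: field_simps power2_eq_square power3_eq_cube)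
    then show ?thesis using Lb by simp
  next
    case Lc
    then show ?thesis using assms by simp
  next
    case Ld
    then show ?thesis using assms by (simp add: power2_eq_square)
  qed
  then show ?case using Cons.IH by (simp add: distrib_left)
qed

lemma F_iter:
  fixes e :: real
  assumes "e ^ 3 + e ^ 2 + e - 2 = 0" "0 < e"
  shows "F e ((Th ^^ n) ys) = (2 / e) ^ n * F e ys"
  by (induction n) (simp_all add: F_Th[OF assms])

lemma F_len:
  fixes e :: real
  assumes "0 < e" "e < 1"
  shows "real (length ys) * e ^ 2 \<le> F e ys"
proof (induction ys)
  case Nil
  then show ?case by simp
next
  case (Cons y ys)
  have e2: "e ^ 2 \<le> e" using assms by (simp add: power2_eq_square mult_le_cancel_right1 less_imp_le)
  have "e ^ 2 \<le> fw e y"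
    using e2 assms by (cases y) auto
  then show ?case using Cons.IH by (simp add: distrib_right)
qed

lemma length_alt': "length (alt' ys) = 2 * length ys"
  by (induction ys) auto

theorem proposition4p7:
  fixes \<eta> :: real
  assumes "\<eta> ^ 3 + \<eta> ^ 2 + \<eta> - 2 = 0"
  shows "\<exists>K::real. \<forall>n::nat. \<exists>w::gen list.
           real (length w) \<le> K * (2 / \<eta>) ^ n \<and> delta w \<ge> 2 ^ n"
proof -
  have pos: "0 < \<eta>" and lt1: "\<eta> < 1" using eta_bounds[OF assms] by auto
  have e2pos: "0 < \<eta> ^ 2" using pos by simp
  show ?thesis
  proof (intro exI allI)
    fix n :: nat
    let ?ys = "(Th ^^ n) [Lb, Lb]"
    let ?w = "alt ?ys"
    let ?q = "(2 / \<eta>) ^ n"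
    have q1: "1 \<le> ?q"
    proof -
      have "1 \<le> 2 / \<eta>" using pos lt1 by (simp add: field_simps)
      then show ?thesis by (rule one_le_power)
    qed
    have F: "F \<eta> ?ys = ?q * 2" using F_iter[OF assms pos] by simp
    have L: "real (length ?ys) * \<eta> ^ 2 \<le> ?q * 2" using F_len[OF pos lt1, of ?ys] F by simp
    then have L2: "real (length ?ys) \<le> ?q * 2 / \<eta> ^ 2"
      by (subst pos_le_divide_eq[OF e2pos])
    have len: "real (length ?w) = 2 * real (length ?ys) + 1"
      by (simp add: alt_def length_alt')
    have eqK: "(4 / \<eta> ^ 2 + 1) * ?q = 2 * (?q * 2 / \<eta> ^ 2) + ?q"
      by (simp add: algebra_simps)
    have "real (length ?w) \<le> (4 / \<eta> ^ 2 + 1) * ?q"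
      unfolding eqK using len L2 q1 by linarith
    moreover have "2 ^ n \<le> delta ?w"
      using growth[of n] by (simp add: delta_Dl)
    ultimately show "real (length ?w) \<le> (4 / \<eta> ^ 2 + 1) * ?q \<and> 2 ^ n \<le> delta ?w" by simp
  qed
qed

end
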